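(* Let $\mathcal{G}$ be a class of graphs with bounded expansion, and let $s\in\mathbb{N}$. Then there exists an integer $d=d(\mathcal{G},s)$ such that every $K_{2,s}$-free graph $G\in\mathcal{G}$ is strongly $d$-degenerate and hence satisfies $\mathrm{HG}(G)\le(2d)^d$.
   Context: A graph $H$ is a shallow minor of $G$ at depth $r$ (integer $r\ge0$) if there are disjoint sets $V_1,\dots,V_p\subseteq V(G)$ such that each $G[V_i]$ contains a vertex $x_i$ with every vertex of $V_i$ at distance at most $r$ from $x_i$ in $G[V_i]$, and $H$ is (isomorphic to) a subgraph of the graph obtained by contracting each $V_i$ to a single vertex (two contracted vertices adjacent iff some edge joins the corresponding sets). $\nabla_r(G)$ is the maximum of $e(H)/v(H)$ over all non-empty shallow minors $H$ of $G$ at depth $r$. A class $\mathcal{G}$ has bounded expansion if for every integer $r\ge0$ there is a constant $C_r$ with $\nabla_r(G)\le C_r$ for all $G\in\mathcal{G}$. A graph is $K_{2,s}$-free if it has no subgraph isomorphic to $K_{2,s}$. For an integer $d\ge1$, a vertex $v$ of $G$ is $d$-removable in $G$ if $d_G(v)\le d$ and at most one neighbour $w$ of $v$ has $d_G(w)>d$; $G$ is strongly $d$-degenerate if every non-empty subgraph $G'$ of $G$ contains a vertex $d$-removable in $G'$. Hat guessing number $\mathrm{HG}(G)$: the largest $q$ such that there are functions $f_v\colon[q]^{N_G(v)}\to[q]$ ($v\in V(G)$) with the property that for every colouring $c\colon V(G)\to[q]$ some $v$ has $f_v((c(w))_{w\in N_G(v)})=c(v)$. *)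

theory Defs
  imports Complex_Main "HOL-Library.FuncSet"
begin

type_synonym 'a graph = "'a set \<times> 'a set set"

definition verts :: "'a graph \<Rightarrow> 'a set" where "verts G = fst G"
definition edges :: "'a graph \<Rightarrow> 'a set set" where "edges G = snd G"

definition graph :: "'a graph \<Rightarrow> bool" where
  "graph G \<longleftrightarrow> finite (verts G) \<and>
     (\<forall>e\<in>edges G. \<exists>u v. e = {u, v} \<and> u \<noteq> v \<and> u \<in> verts G \<and> v \<in> verts G)"

definition nbrs :: "'a graph \<Rightarrow> 'a \<Rightarrow> 'a set" where
  "nbrs G v = {w \<in> verts G. {v, w} \<in> edges G}"

definition degree :: "'a graph \<Rightarrow> 'a \<Rightarrow> nat" where
  "degree G v = card (nbrs G v)"

definition subgraph :: "'a graph \<Rightarrow> 'a graph \<Rightarrow> bool" where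
  "subgraph H G \<longleftrightarrow> graph H \<and> verts H \<subseteq> verts G \<and> edges H \<subseteq> edges G"

fun reach_in :: "'a set set \<Rightarrow> 'a set \<Rightarrow> 'a \<Rightarrow> nat \<Rightarrow> 'a \<Rightarrow> bool" where
  "reach_in E S x 0 y \<longleftrightarrow> x \<in> S \<and> y = x"
| "reach_in E S x (Suc n) y \<longleftrightarrow> reach_in E S x n y \<or>
     (\<exists>z. reach_in E S x n z \<and> y \<in> S \<and> {z, y} \<in> E)"

text \<open>H is a shallow minor of G at depth r: there are disjoint branch sets
  B 0, ..., B (p-1) of radius at most r (in the induced subgraphs), and H is
  isomorphic (via the injective edge-preserving map f) to a subgraph of the
  graph obtained by contracting each branch set.\<close>
definition shallow_minor :: "nat \<Rightarrow> 'a graph \<Rightarrow> 'b graph \<Rightarrow> bool" where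
  "shallow_minor r G H \<longleftrightarrow> graph H \<and>
    (\<exists>(p::nat) (B::nat \<Rightarrow> 'a set) (f::'b \<Rightarrow> nat).
       (\<forall>i<p. B i \<subseteq> verts G \<and> (\<exists>x\<in>B i. \<forall>y\<in>B i. reach_in (edges G) (B i) x r y)) \<and>
       (\<forall>i<p. \<forall>j<p. i \<noteq> j \<longrightarrow> B i \<inter> B j = {}) \<and>
       inj_on f (verts H) \<and> f ` verts H \<subseteq> {..<p} \<and>
       (\<forall>u\<in>verts H. \<forall>v\<in>verts H. {u, v} \<in> edges H \<longrightarrow>
          (\<exists>a\<in>B (f u). \<exists>b\<in>B (f v). {a, b} \<in> edges G)))"

text \<open>nabla_r(G) \<le> C, i.e. e(H)/v(H) \<le> C for every non-empty shallow minor H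
  at depth r (shallow minors are taken up to isomorphism, represented on
  vertex type nat).\<close>
definition nabla_le :: "nat \<Rightarrow> 'a graph \<Rightarrow> real \<Rightarrow> bool" where
  "nabla_le r G C \<longleftrightarrow> (\<forall>H :: nat graph. shallow_minor r G H \<and> verts H \<noteq> {} \<longrightarrow>
      real (card (edges H)) / real (card (verts H)) \<le> C)"

definition bounded_expansion :: "'a graph set \<Rightarrow> bool" where
  "bounded_expansion \<G> \<longleftrightarrow> (\<forall>r. \<exists>C. \<forall>G\<in>\<G>. nabla_le r G C)"

definition K2s_free :: "nat \<Rightarrow> 'a graph \<Rightarrow> bool" where
  "K2s_free s G \<longleftrightarrow> \<not> (\<exists>a b S. a \<in> verts G \<and> b \<in> verts G \<and> a \<noteq> b \<and>
      S \<subseteq> verts G - {a, b} \<and> card S = s \<and> finite S \<and>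
      (\<forall>x\<in>S. {a, x} \<in> edges G \<and> {b, x} \<in> edges G))"

definition removable :: "nat \<Rightarrow> 'a graph \<Rightarrow> 'a \<Rightarrow> bool" where
  "removable d G v \<longleftrightarrow> v \<in> verts G \<and> degree G v \<le> d \<and>
     card {w \<in> nbrs G v. degree G w > d} \<le> 1"

definition strongly_degenerate :: "nat \<Rightarrow> 'a graph \<Rightarrow> bool" where
  "strongly_degenerate d G \<longleftrightarrow>
     (\<forall>G'. subgraph G' G \<and> verts G' \<noteq> {} \<longrightarrow> (\<exists>v. removable d G' v))"

text \<open>q colours {0..<q}; f v sees the colouring restricted to the
  neighbourhood of v.\<close>
definition hat_guessing_win :: "'a graph \<Rightarrow> nat \<Rightarrow> bool" where
  "hat_guessing_win G q \<longleftrightarrow> (\<exists>f :: 'a \<Rightarrow> ('a \<Rightarrow> nat) \<Rightarrow> nat.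
     (\<forall>v\<in>verts G. \<forall>g. f v g < q) \<and>
     (\<forall>c. (\<forall>v\<in>verts G. c v < q) \<longrightarrow>
        (\<exists>v\<in>verts G. f v (restrict c (nbrs G v)) = c v)))"

end

theory Submission
  imports Defs
begin


definition rem :: "'a graph \<Rightarrow> 'a \<Rightarrow> 'a graph" where
  "rem G u = (verts G - {u}, {e \<in> edges G. u \<notin> e})"

lemma verts_rem[simp]: "verts (rem G u) = verts G - {u}"
  by (simp add: rem_def verts_def)
lemma edges_rem[simp]: "edges (rem G u) = {e \<in> edges G. u \<notin> e}"
  by (simp add: rem_def edges_def)

lemma graph_rem:
  assumes "graph G" shows "graph (rem G u)"
  unfolding graph_def
proof (intro conjI ballI)
  show "finite (verts (rem G u))" using assms unfolding graph_def by simp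
  fix e assume "e \<in> edges (rem G u)"
  then have e: "e \<in> edges G" "u \<notin> e" by auto
  then obtain a b where "e = {a,b}" "a\<noteq>b" "a \<in> verts G" "b \<in> verts G"
    using assms unfolding graph_def by blast
  then show "\<exists>a b. e = {a, b} \<and> a \<noteq> b \<and> a \<in> verts (rem G u) \<and> b \<in> verts (rem G u)"
    using e by auto
qed

lemma graph_finite_nbrs: "graph G \<Longrightarrow> finite (nbrs G w)"
  unfolding graph_def nbrs_def by auto

lemma graph_finite_edges: "graph G \<Longrightarrow> finite (edges G)"
proof -
  assume g: "graph G"
  have "edges G \<subseteq> Pow (verts G)"
  proof
    fix e assume e: "e \<in> edges G"
    have "\<forall>e\<in>edges G. \<exists>u v. e = {u, v} \<and> u \<noteq> v \<and> u \<in> verts G \<and> v \<in> verts G"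
      using g unfolding graph_def by simp
    then obtain a b where "e = {a,b}" "a \<in> verts G" "b \<in> verts G" using e by blast
    then show "e \<in> Pow (verts G)" by simp
  qed
  moreover have "finite (Pow (verts G))" using g unfolding graph_def by simp
  ultimately show ?thesis by (rule finite_subset)
qed

lemma not_self_nbr:
  assumes g: "graph G" shows "u \<notin> nbrs G u"
proof
  assume "u \<in> nbrs G u"
  then have e: "{u} \<in> edges G" by (simp add: nbrs_def)
  have "\<forall>e\<in>edges G. \<exists>u v. e = {u, v} \<and> u \<noteq> v \<and> u \<in> verts G \<and> v \<in> verts G"
    using g unfolding graph_def by simp
  then obtain a b where ab: "{u} = {a,b}" "a \<noteq> b" using e by blast
  then have "a \<in> {u}" "b \<in> {u}" by simp_all
  then show False using ab(2) by simp
qed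

lemma nbrs_sym: "u \<in> verts G \<Longrightarrow> w \<in> nbrs G u \<Longrightarrow> u \<in> nbrs G w"
  unfolding nbrs_def by (simp add: insert_commute)

lemma nbrs_rem: "w \<noteq> u \<Longrightarrow> nbrs (rem G u) w = nbrs G w - {u}"
  unfolding nbrs_def by auto

lemma subgraph_trans: "subgraph H G' \<Longrightarrow> subgraph G' G \<Longrightarrow> subgraph H G"
  unfolding subgraph_def by auto

lemma subgraph_rem: "graph G \<Longrightarrow> subgraph (rem G u) G"
  unfolding subgraph_def using graph_rem[of G u] by auto

lemma sd_rem:
  assumes g: "graph G" and sd: "strongly_degenerate d G"
  shows "strongly_degenerate d (rem G u)"
  unfolding strongly_degenerate_def
proof (intro allI impI)
  fix H assume H: "subgraph H (rem G u) \<and> verts H \<noteq> {}"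
  then have "subgraph H G" using subgraph_trans[OF _ subgraph_rem[OF g]] by blast
  then show "\<exists>v. removable d H v" using sd H unfolding strongly_degenerate_def by blast
qed

lemma count_thresh:
  fixes A :: "nat \<Rightarrow> nat set"
  assumes "\<forall>z<Q. A z \<subseteq> {..<Q} \<and> card (A z) \<le> b"
  shows "card {x \<in> {..<Q}. \<theta> \<le> card {z \<in> {..<Q}. x \<in> A z}} * \<theta> \<le> Q * b"
proof -
  define X where "X = {x \<in> {..<Q}. \<theta> \<le> card {z \<in> {..<Q}. x \<in> A z}}"
  have "card X * \<theta> = (\<Sum>x\<in>X. \<theta>)" by simp
  also have "\<dots> \<le> (\<Sum>x\<in>X. card {z \<in> {..<Q}. x \<in> A z})"
    by (rule sum_mono) (simp add: X_def)
  also have "\<dots> \<le> (\<Sum>x\<in>{..<Q}. card {z \<in> {..<Q}. x \<in> A z})"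
    by (rule sum_mono2) (auto simp: X_def)
  also have "\<dots> = (\<Sum>x\<in>{..<Q}. \<Sum>z\<in>{..<Q}. if x \<in> A z then 1 else 0)"
    by (simp add: sum.inter_filter[symmetric])
  also have "\<dots> = (\<Sum>z\<in>{..<Q}. \<Sum>x\<in>{..<Q}. if x \<in> A z then 1 else 0)"
    by (rule sum.swap)
  also have "\<dots> = (\<Sum>z\<in>{..<Q}. card {x \<in> {..<Q}. x \<in> A z})"
    by (simp add: sum.inter_filter[symmetric])
  also have "\<dots> \<le> (\<Sum>z\<in>{..<Q}. b)"
  proof (rule sum_mono)
    fix z assume "z \<in> {..<Q}"
    then have "{x \<in> {..<Q}. x \<in> A z} = A z" using assms by auto
    then show "card {x \<in> {..<Q}. x \<in> A z} \<le> b" using assms \<open>z \<in> {..<Q}\<close> by auto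
  qed
  also have "\<dots> = Q * b" by simp
  finally show ?thesis unfolding X_def .
qed



lemma core:
  fixes d K Q :: nat and G :: "'a graph" and F :: "'a \<Rightarrow> ('a \<Rightarrow> nat) \<Rightarrow> nat set"
  assumes d: "d \<ge> 1" and K: "K = (4*d)^d + 1" and Q: "Q = 4*d*K"
  shows "card (verts G) = n \<Longrightarrow> graph G \<Longrightarrow> strongly_degenerate d G \<Longrightarrow>
    (\<forall>w\<in>verts G. \<forall>c c'. (\<forall>x\<in>nbrs G w. c x = c' x) \<longrightarrow> F w c = F w c') \<Longrightarrow>
    (\<forall>w\<in>verts G. \<forall>c. F w c \<subseteq> {..<Q} \<and> card (F w c) \<le> (4*d)^(d - degree G w)) \<Longrightarrow>
    \<exists>c. \<forall>v\<in>verts G. c v < Q \<and> c v \<notin> F v c"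
proof (induction n arbitrary: G F)
  case 0
  then have "verts G = {}" unfolding graph_def by auto
  then show ?case by auto
next
  case (Suc n)
  note loc = Suc.prems(4) and bnd = Suc.prems(5)
  have g: "graph G" by fact
  have ne: "verts G \<noteq> {}" using Suc.prems(1) by auto
  have "subgraph G G" using g unfolding subgraph_def by auto
  then obtain u where u: "removable d G u"
    using Suc.prems(3) ne unfolding strongly_degenerate_def by blast
  have uV: "u \<in> verts G" and degu: "degree G u \<le> d"
    and big1: "card {w \<in> nbrs G u. degree G w > d} \<le> 1"
    using u unfolding removable_def by auto
  define G' where "G' = rem G u"
  define N where "N = nbrs G u"
  define \<theta> where "\<theta> w = (if degree G w > d then 2*d*K+1 else K)" for w
  define T where "T w c x = {z \<in> {..<Q}. x \<in> F w (c(u:=z))}" for w c x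
  define F' where "F' w c = (if w \<in> N then {x \<in> {..<Q}. \<theta> w \<le> card (T w c x)} else F w c)" for w c
  have finN: "finite N" unfolding N_def using graph_finite_nbrs[OF g] .
  have NV: "N \<subseteq> verts G" unfolding N_def nbrs_def by auto
  have uN: "u \<notin> N" unfolding N_def using not_self_nbr[OF g] .
  have cardN: "card N \<le> d" using degu unfolding N_def degree_def .
  have Kpos: "K \<ge> 1" using K by simp
  have g': "graph G'" unfolding G'_def using graph_rem[OF g] .
  have sd': "strongly_degenerate d G'" unfolding G'_def using sd_rem[OF g Suc.prems(3)] .
  have card': "card (verts G') = n" unfolding G'_def using Suc.prems(1) uV g
    unfolding graph_def by auto
  have nbrs_notN: "nbrs G' w = nbrs G w" if "w \<in> verts G'" "w \<notin> N" for w
  proof -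
    have "w \<noteq> u" using that unfolding G'_def by auto
    moreover have "u \<notin> nbrs G w" using that nbrs_sym[of w G u] NV uV
      unfolding N_def G'_def by auto
    ultimately show ?thesis unfolding G'_def using nbrs_rem[of w u G] by auto
  qed
  have nbrs_N: "nbrs G' w = nbrs G w - {u}" if "w \<in> N" for w
    using that uN unfolding G'_def by (intro nbrs_rem) auto
  have deg_N: "degree G' w + 1 = degree G w" if "w \<in> N" for w
  proof -
    have "u \<in> nbrs G w" using that nbrs_sym[of u G w] uV unfolding N_def by auto
    then show ?thesis unfolding degree_def using nbrs_N[OF that] graph_finite_nbrs[OF g, of w]
      by (simp add: card_Diff_singleton) (metis One_nat_def Suc_pred card_gt_0_iff empty_iff)
  qed
  have loc': "\<forall>w\<in>verts G'. \<forall>c c'. (\<forall>x\<in>nbrs G' w. c x = c' x) \<longrightarrow> F' w c = F' w c'"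
  proof (intro ballI allI impI)
    fix w and c c' :: "'a \<Rightarrow> nat" assume wV: "w \<in> verts G'" and agree: "\<forall>x\<in>nbrs G' w. c x = c' x"
    have wV0: "w \<in> verts G" using wV unfolding G'_def by auto
    show "F' w c = F' w c'"
    proof (cases "w \<in> N")
      case True
      have "F w (c(u:=z)) = F w (c'(u:=z))" for z
        using loc wV0 agree nbrs_N[OF True] by (intro loc[rule_format]) auto
      then have "T w c x = T w c' x" for x unfolding T_def by simp
      then show ?thesis using True unfolding F'_def by simp
    next
      case False
      then show ?thesis unfolding F'_def using loc wV0 agree nbrs_notN[OF wV False] by auto
    qed
  qed
  have bnd': "\<forall>w\<in>verts G'. \<forall>c. F' w c \<subseteq> {..<Q} \<and> card (F' w c) \<le> (4*d)^(d - degree G' w)"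
  proof (intro ballI allI)
    fix w and c :: "'a \<Rightarrow> nat" assume wV: "w \<in> verts G'"
    have wV0: "w \<in> verts G" using wV unfolding G'_def by auto
    show "F' w c \<subseteq> {..<Q} \<and> card (F' w c) \<le> (4*d)^(d - degree G' w)"
    proof (cases "w \<in> N")
      case False
      have "degree G' w = degree G w" unfolding degree_def using nbrs_notN[OF wV False] by simp
      then show ?thesis unfolding F'_def using False bnd wV0 by auto
    next
      case True
      let ?b = "(4*d)^(d - degree G w)"
      have ct: "card (F' w c) * \<theta> w \<le> Q * ?b"
      proof -
        have "\<forall>z<Q. F w (c(u:=z)) \<subseteq> {..<Q} \<and> card (F w (c(u:=z))) \<le> ?b"
          using bnd wV0 by blast
        from count_thresh[OF this, of "\<theta> w"] show ?thesis
          unfolding F'_def T_def using True by simp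
      qed
      have "card (F' w c) \<le> (4*d)^(d - degree G' w)"
      proof (cases "degree G w > d")
        case True
        have b1: "?b = 1" using True by simp
        have th: "\<theta> w = 2*d*K+1" using True unfolding \<theta>_def by simp
        show ?thesis
        proof (rule ccontr)
          assume "\<not> ?thesis"
          moreover have "1 \<le> (4*d)^(d - degree G' w)" using d by simp
          ultimately have "2 \<le> card (F' w c)" by linarith
          then have "2 * (2*d*K+1) \<le> card (F' w c) * (2*d*K+1)" by (rule mult_right_mono) simp
          then show False using ct b1 th Q by simp
        qed
      next
        case False
        have th: "\<theta> w = K" using False unfolding \<theta>_def by simp
        have "card (F' w c) * K \<le> (4*d*?b) * K" using ct th Q by (simp add: ac_simps)
        then have "card (F' w c) \<le> 4*d*?b" using Kpos by simp
        also have "\<dots> = (4*d)^(Suc (d - degree G w))" by simp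
        also have "Suc (d - degree G w) = d - degree G' w" using False deg_N[OF True] by simp
        finally show ?thesis .
      qed
      then show ?thesis using \<open>w \<in> N\<close> unfolding F'_def by auto
    qed
  qed
  obtain c' where c': "\<forall>v\<in>verts G'. c' v < Q \<and> c' v \<notin> F' v c'"
    using Suc.IH[OF card' g' sd' loc' bnd'] by blast
  define Ex where "Ex = F u c' \<union> (\<Union>w\<in>N. T w c' (c' w))"
  have Tsmall: "card (T w c' (c' w)) < \<theta> w" if "w \<in> N" for w
  proof -
    have "w \<in> verts G'" using that NV uN unfolding G'_def by auto
    then have "c' w < Q" "c' w \<notin> F' w c'" using c' by auto
    then show ?thesis using that unfolding F'_def by auto
  qed
  have finT: "finite (T w c x)" for w c x unfolding T_def by simp
  have "card Ex \<le> card (F u c') + card (\<Union>w\<in>N. T w c' (c' w))"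
    unfolding Ex_def by (rule card_Un_le)
  also have "card (\<Union>w\<in>N. T w c' (c' w)) \<le> (\<Sum>w\<in>N. card (T w c' (c' w)))"
    using finN by (rule card_UN_le)
  also have "\<dots> \<le> (\<Sum>w\<in>N. K + (if degree G w > d then 2*d*K else 0))"
    by (rule sum_mono) (use Tsmall in \<open>fastforce simp: \<theta>_def split: if_splits\<close>)
  also have "\<dots> = card N * K + 2*d*K * card {w \<in> N. degree G w > d}"
  proof -
    have "(\<Sum>w\<in>N. (if degree G w > d then 2*d*K else 0)) = (\<Sum>w\<in>{w \<in> N. degree G w > d}. 2*d*K)"
      by (simp only: sum.inter_filter[OF finN])
    then show ?thesis by (simp add: sum.distrib)
  qed
  also have "\<dots> \<le> d * K + 2*d*K * 1"
    using cardN big1 unfolding N_def by (intro add_mono mult_mono) auto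
  finally have e1: "card Ex \<le> card (F u c') + (d*K + 2*d*K)" by simp
  have "card (F u c') \<le> (4*d)^(d - degree G u)" using bnd uV by auto
  also have "\<dots> \<le> (4*d)^d" using d by (intro power_increasing) auto
  finally have "card (F u c') < K" using K by simp
  moreover have "K \<le> K * d" using d by simp
  moreover have "Q = K*d + 3*(K*d)" using Q by simp
  moreover have "card Ex \<le> card (F u c') + 3*(K*d)" using e1 by (simp add: algebra_simps)
  ultimately have "card Ex < Q" by linarith
  moreover have "finite Ex" unfolding Ex_def
  proof (intro finite_UnI finite_UN_I finN finT)
    show "finite (F u c')" using bnd uV finite_subset[of "F u c'" "{..<Q}"] by auto
  qed
  ultimately have "\<not> {..<Q} \<subseteq> Ex"
    using card_mono[of Ex "{..<Q}"] by auto
  then obtain z where z: "z < Q" "z \<notin> Ex" by auto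
  define c where "c = c'(u:=z)"
  have "\<forall>v\<in>verts G. c v < Q \<and> c v \<notin> F v c"
  proof
    fix v assume vV: "v \<in> verts G"
    show "c v < Q \<and> c v \<notin> F v c"
    proof (cases "v = u")
      case True
      have "F u c = F u c'" using loc uV not_self_nbr[OF g, of u] unfolding c_def
        by (intro loc[rule_format]) auto
      then show ?thesis using True z unfolding c_def Ex_def by auto
    next
      case vu: False
      have vV': "v \<in> verts G'" using vV vu unfolding G'_def by auto
      show ?thesis
      proof (cases "v \<in> N")
        case True
        then have "z \<notin> T v c' (c' v)" using z unfolding Ex_def by auto
        then show ?thesis using z vu c' vV' unfolding c_def T_def by auto
      next
        case False
        have "u \<notin> nbrs G v" using False nbrs_sym[of v G u] vV unfolding N_def by auto
        then have "F v c = F v c'" using loc vV unfolding c_def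
          by (intro loc[rule_format]) auto
        then show ?thesis using c' vV' vu False unfolding c_def F'_def by auto
      qed
    qed
  qed
  then show ?case by blast
qed



lemma minor_count:
  fixes G :: "'a graph" and W :: "'a set" and E' :: "'a set set" and B :: "'a \<Rightarrow> 'a set"
  assumes nab: "nabla_le 1 G C" and finW: "finite W" and neW: "W \<noteq> {}"
    and shp: "\<forall>e\<in>E'. \<exists>a b. e = {a,b} \<and> a \<noteq> b \<and> a \<in> W \<and> b \<in> W"
    and br: "\<forall>a\<in>W. B a \<subseteq> verts G \<and> a \<in> B a \<and> (\<forall>y\<in>B a. reach_in (edges G) (B a) a 1 y)"
    and dj: "\<forall>a\<in>W. \<forall>b\<in>W. a \<noteq> b \<longrightarrow> B a \<inter> B b = {}"
    and ed: "\<forall>a\<in>W. \<forall>b\<in>W. {a,b} \<in> E' \<longrightarrow> (\<exists>x\<in>B a. \<exists>y\<in>B b. {x,y} \<in> edges G)"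
  shows "real (card E') \<le> C * real (card W)"
proof -
  define m where "m = card W"
  obtain g where bij: "bij_betw g W {0..<m}" using ex_bij_betw_finite_nat[OF finW] m_def by blast
  have inj: "inj_on g W" using bij by (rule bij_betw_imp_inj_on)
  have gW: "g ` W = {0..<m}" using bij by (rule bij_betw_imp_surj_on)
  define h where "h = inv_into W g"
  have hg: "h (g a) = a" if "a \<in> W" for a using inj that unfolding h_def by simp
  have hW: "h i \<in> W" if "i < m" for i
  proof -
    have "i \<in> g ` W" using that gW by simp
    then show ?thesis unfolding h_def by (rule inv_into_into)
  qed
  have gh: "g (h i) = i" if "i < m" for i
  proof -
    have "i \<in> g ` W" using that gW by simp
    then show ?thesis unfolding h_def by (rule f_inv_into_f)
  qed
  define H :: "nat graph" where "H = ({0..<m}, (image g) ` E')"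
  have vH: "verts H = {0..<m}" and eH: "edges H = (image g) ` E'"
    unfolding H_def verts_def edges_def by auto
  have E'W: "E' \<subseteq> Pow W"
  proof
    fix e assume "e \<in> E'"
    then obtain a b where "e = {a,b}" "a \<in> W" "b \<in> W" using shp by blast
    then show "e \<in> Pow W" by simp
  qed
  have injE: "inj_on (image g) E'" by (rule inj_on_subset[OF inj_on_image_Pow[OF inj] E'W])
  have cardE: "card (edges H) = card E'"
    unfolding eH using injE by (rule card_image)
  have gH: "graph H"
    unfolding graph_def
  proof (intro conjI ballI)
    show "finite (verts H)" unfolding vH by simp
    fix e assume "e \<in> edges H"
    then obtain e0 where e0: "e0 \<in> E'" "e = g ` e0" unfolding eH by blast
    then obtain a b where ab: "e0 = {a,b}" "a \<noteq> b" "a \<in> W" "b \<in> W" using shp by blast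
    have "g a \<noteq> g b" using inj ab unfolding inj_on_def by blast
    moreover have "g a \<in> verts H" "g b \<in> verts H" using ab gW vH by auto
    moreover have "e = {g a, g b}" using e0 ab by simp
    ultimately show "\<exists>u v. e = {u, v} \<and> u \<noteq> v \<and> u \<in> verts H \<and> v \<in> verts H"
      by (intro exI[of _ "g a"] exI[of _ "g b"]) simp
  qed
  have sm: "shallow_minor 1 G H"
    unfolding shallow_minor_def
  proof (intro conjI exI[of _ m] exI[of _ "\<lambda>i. B (h i)"] exI[of _ "id"])
    show "graph H" by (rule gH)
    show "\<forall>i<m. B (h i) \<subseteq> verts G \<and> (\<exists>x\<in>B (h i). \<forall>y\<in>B (h i). reach_in (edges G) (B (h i)) x 1 y)"
    proof (intro allI impI)
      fix i assume "i < m"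
      then have hi: "h i \<in> W" by (rule hW)
      have X: "B (h i) \<subseteq> verts G \<and> h i \<in> B (h i) \<and> (\<forall>y\<in>B (h i). reach_in (edges G) (B (h i)) (h i) 1 y)"
        by (rule bspec[OF br hi])
      from X have a1: "B (h i) \<subseteq> verts G" by (rule conjunct1)
      from X have a2: "h i \<in> B (h i)" by (rule conjunct1[OF conjunct2])
      from X have a3: "\<forall>y\<in>B (h i). reach_in (edges G) (B (h i)) (h i) 1 y" by (rule conjunct2[OF conjunct2])
      show "B (h i) \<subseteq> verts G \<and> (\<exists>x\<in>B (h i). \<forall>y\<in>B (h i). reach_in (edges G) (B (h i)) x 1 y)"
        using a1 bexI[of "\<lambda>x. \<forall>y\<in>B (h i). reach_in (edges G) (B (h i)) x 1 y", OF a3 a2] by (rule conjI)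
    qed
    show "\<forall>i<m. \<forall>j<m. i \<noteq> j \<longrightarrow> B (h i) \<inter> B (h j) = {}"
    proof (intro allI impI)
      fix i j assume ij: "i < m" "j < m" "i \<noteq> j"
      then have "h i \<noteq> h j" using gh by metis
      then show "B (h i) \<inter> B (h j) = {}" using dj hW ij by blast
    qed
    show "inj_on id (verts H)" by simp
    show "id ` verts H \<subseteq> {..<m}" unfolding vH by auto
    show "\<forall>u\<in>verts H. \<forall>v\<in>verts H. {u, v} \<in> edges H \<longrightarrow> (\<exists>a\<in>B (h (id u)). \<exists>b\<in>B (h (id v)). {a, b} \<in> edges G)"
    proof (intro ballI impI)
      fix u v assume uv: "u \<in> verts H" "v \<in> verts H" "{u,v} \<in> edges H"
      then obtain e0 where e0: "e0 \<in> E'" "{u,v} = g ` e0" unfolding eH by blast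
      then obtain a b where ab: "e0 = {a,b}" "a \<noteq> b" "a \<in> W" "b \<in> W" using shp by blast
      have "{u,v} = {g a, g b}" using e0 ab by auto
      then have "(u = g a \<and> v = g b) \<or> (u = g b \<and> v = g a)" by (auto simp: doubleton_eq_iff)
      then show "\<exists>x\<in>B (h (id u)). \<exists>y\<in>B (h (id v)). {x, y} \<in> edges G"
      proof
        assume uv2: "u = g a \<and> v = g b"
        have "{a,b} \<in> E'" using ab e0 by simp
        then have "\<exists>x\<in>B a. \<exists>y\<in>B b. {x,y} \<in> edges G" using ed ab by blast
        then show ?thesis using uv2 hg ab by simp
      next
        assume uv2: "u = g b \<and> v = g a"
        have "{b,a} \<in> E'" using ab e0 by (simp add: insert_commute)
        then have "\<exists>x\<in>B b. \<exists>y\<in>B a. {x,y} \<in> edges G" using ed ab by blast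
        then show ?thesis using uv2 hg ab by simp
      qed
    qed
  qed
  have "m > 0" using neW finW m_def by (simp add: card_gt_0_iff)
  then have "verts H \<noteq> {}" unfolding vH by simp
  then have "real (card (edges H)) / real (card (verts H)) \<le> C"
    using sm by (intro nab[unfolded nabla_le_def, rule_format]) simp
  then have "real (card E') / real m \<le> C" using cardE vH by simp
  then show ?thesis using \<open>m > 0\<close> m_def by (simp add: divide_le_eq mult.commute)
qed

lemma degree_sum:
  assumes g: "graph G"
  shows "(\<Sum>v\<in>verts G. degree G v) \<le> 2 * card (edges G)"
proof -
  have fV: "finite (verts G)" using g by (simp add: graph_def)
  have fE: "finite (edges G)" using graph_finite_edges[OF g] .
  define P where "P e = {(x,y). {x,y} = e}" for e :: "'a set"
  have P2: "finite (P e) \<and> card (P e) \<le> 2" if "e \<in> edges G" for e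
  proof -
    have "\<exists>u v. e = {u,v} \<and> u \<noteq> v \<and> u \<in> verts G \<and> v \<in> verts G"
      using g that unfolding graph_def by (elim conjE) (erule bspec)
    then obtain a b where ab: "e = {a,b}" by (elim exE conjE) simp
    have sub: "P e \<subseteq> {(a,b),(b,a)}"
    proof
      fix p assume "p \<in> P e"
      then obtain x y where xy: "p = (x,y)" "{x,y} = {a,b}" unfolding P_def ab by (cases p) auto
      then have "(x = a \<and> y = b) \<or> (x = b \<and> y = a)" by (simp add: doubleton_eq_iff)
      then show "p \<in> {(a,b),(b,a)}" using xy by blast
    qed
    have c2: "card {(a,b),(b,a)} \<le> 2" by (cases "a = b") auto
    have "finite (P e)" using sub by (rule finite_subset) simp
    moreover have "card (P e) \<le> 2" using card_mono[OF _ sub] c2 by simp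
    ultimately show ?thesis by simp
  qed
  have "(\<Sum>v\<in>verts G. degree G v) = card (SIGMA v:verts G. nbrs G v)"
    unfolding degree_def using fV graph_finite_nbrs[OF g] by simp
  also have "\<dots> \<le> card (\<Union>e\<in>edges G. P e)"
  proof (rule card_mono)
    show "finite (\<Union>e\<in>edges G. P e)" using fE P2 by (intro finite_UN_I) auto
    show "(SIGMA v:verts G. nbrs G v) \<subseteq> (\<Union>e\<in>edges G. P e)"
    proof
      fix p assume "p \<in> (SIGMA v:verts G. nbrs G v)"
      then obtain v w where p: "p = (v,w)" "{v,w} \<in> edges G" unfolding nbrs_def by (cases p) auto
      then have "p \<in> P {v,w}" unfolding P_def by simp
      then show "p \<in> (\<Union>e\<in>edges G. P e)" using p by blast
    qed
  qed
  also have "\<dots> \<le> (\<Sum>e\<in>edges G. card (P e))" using fE by (rule card_UN_le)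
  also have "\<dots> \<le> (\<Sum>e\<in>edges G. 2)" using P2 by (intro sum_mono) auto
  finally show ?thesis by simp
qed



lemma two_elems:
  assumes "2 \<le> card X"
  shows "\<exists>a b. a \<in> X \<and> b \<in> X \<and> a \<noteq> b"
proof -
  obtain Y where Y: "Y \<subseteq> X" "card Y = 2" using obtain_subset_with_card_n[OF assms] by metis
  then obtain a b where "Y = {a,b}" "a \<noteq> b" unfolding card_2_iff by blast
  then show ?thesis using Y(1) by blast
qed

lemma part1:
  fixes G :: "'a graph" and C :: real and d s :: nat
  assumes g: "graph G" and nab: "nabla_le 1 G C" and C0: "C \<ge> 0" and ks: "K2s_free s G"
    and dC: "real d + 1 > 2*C*(1 + real s*C)"
  shows "strongly_degenerate d G"
  unfolding strongly_degenerate_def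
proof (intro allI impI)
  fix G' :: "'a graph" assume H: "subgraph G' G \<and> verts G' \<noteq> {}"
  show "\<exists>v. removable d G' v"
  proof (rule ccontr)
    assume nrem: "\<not> (\<exists>v. removable d G' v)"
    have g': "graph G'" and VG: "verts G' \<subseteq> verts G" and EG: "edges G' \<subseteq> edges G"
      and ne: "verts G' \<noteq> {}" using H unfolding subgraph_def by auto
    define V where "V = verts G'"
    define E where "E = edges G'"
    have fV: "finite V" using g' unfolding graph_def V_def by simp
    define L where "L = {v \<in> V. degree G' v > d}"
    define S where "S = V - L"
    define Lv where "Lv v = {w \<in> nbrs G' v. degree G' w > d}" for v
    have LvL: "Lv v \<subseteq> L" for v unfolding Lv_def L_def nbrs_def V_def by auto
    have "\<exists>p. fst p \<in> Lv v \<and> snd p \<in> Lv v \<and> fst p \<noteq> snd p" if "v \<in> S" for v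
    proof -
      have "\<not> card (Lv v) \<le> 1" using nrem that unfolding removable_def S_def L_def V_def Lv_def by auto
      then have "2 \<le> card (Lv v)" by simp
      then obtain a b where "a \<in> Lv v" "b \<in> Lv v" "a \<noteq> b" using two_elems by blast
      then show ?thesis by (intro exI[of _ "(a,b)"]) simp
    qed
    then have "\<forall>v\<in>S. \<exists>p. fst p \<in> Lv v \<and> snd p \<in> Lv v \<and> fst p \<noteq> snd p" by blast
    from bchoice[OF this] obtain pr where pr: "\<forall>v\<in>S. fst (pr v) \<in> Lv v \<and> snd (pr v) \<in> Lv v \<and> fst (pr v) \<noteq> snd (pr v)"
      by blast
    have prL: "fst (pr v) \<in> L" "snd (pr v) \<in> L" "fst (pr v) \<noteq> snd (pr v)" if "v \<in> S" for v
      using pr that LvL by blast+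
    have prE: "{v, fst (pr v)} \<in> E" "{v, snd (pr v)} \<in> E" if "v \<in> S" for v
      using pr that unfolding Lv_def nbrs_def E_def by auto
    have SV: "S \<subseteq> V" and LV: "L \<subseteq> V" and SL: "S \<inter> L = {}" unfolding S_def L_def by auto
    have VGV: "V \<subseteq> verts G" using VG V_def by simp
    have EGE: "E \<subseteq> edges G" using EG E_def by simp
    have Eshape: "\<forall>e\<in>E. \<exists>a b. e = {a,b} \<and> a \<noteq> b \<and> a \<in> V \<and> b \<in> V"
      using g' unfolding graph_def E_def V_def by simp
    have stepA: "real (card E) \<le> C * real (card V)"
    proof (rule minor_count[OF nab fV, of E "\<lambda>a. {a}"])
      show "V \<noteq> {}" using ne V_def by simp
      show "\<forall>e\<in>E. \<exists>a b. e = {a,b} \<and> a \<noteq> b \<and> a \<in> V \<and> b \<in> V" by (rule Eshape)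
      show "\<forall>a\<in>V. {a} \<subseteq> verts G \<and> a \<in> {a} \<and> (\<forall>y\<in>{a}. reach_in (edges G) {a} a 1 y)"
        using VGV by auto
      show "\<forall>a\<in>V. \<forall>b\<in>V. a \<noteq> b \<longrightarrow> {a} \<inter> {b} = {}" by simp
      show "\<forall>a\<in>V. \<forall>b\<in>V. {a,b} \<in> E \<longrightarrow> (\<exists>x\<in>{a}. \<exists>y\<in>{b}. {x,y} \<in> edges G)"
        using EGE by auto
    qed
    define pe where "pe v = {fst (pr v), snd (pr v)}" for v
    define P2 where "P2 = pe ` S"
    have fL: "finite L" using fV LV finite_subset by blast
    have neL: "L \<noteq> {}"
    proof (cases "S = {}")
      case True
      then have "L = V" using LV unfolding S_def by auto
      then show ?thesis using ne V_def by simp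
    next
      case False
      then obtain v where "v \<in> S" by blast
      then show ?thesis using prL by blast
    qed
    define B where "B a = insert a {v \<in> S. fst (pr v) = a}" for a
    have stepB: "real (card P2) \<le> C * real (card L)"
    proof (rule minor_count[OF nab fL neL, of P2 B])
      show "\<forall>e\<in>P2. \<exists>a b. e = {a,b} \<and> a \<noteq> b \<and> a \<in> L \<and> b \<in> L"
        unfolding P2_def pe_def using prL by blast
      show "\<forall>a\<in>L. B a \<subseteq> verts G \<and> a \<in> B a \<and> (\<forall>y\<in>B a. reach_in (edges G) (B a) a 1 y)"
      proof (intro ballI conjI)
        fix a assume aL: "a \<in> L"
        show "B a \<subseteq> verts G" unfolding B_def using aL SV LV VGV by auto
        show "a \<in> B a" unfolding B_def by simp
        fix y assume y: "y \<in> B a"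
        show "reach_in (edges G) (B a) a 1 y"
        proof (cases "y = a")
          case True
          then show ?thesis unfolding B_def by simp
        next
          case False
          then have yS: "y \<in> S" and fy: "fst (pr y) = a" using y unfolding B_def by auto
          have "{y, a} \<in> edges G" using prE(1)[OF yS] fy EGE by auto
          then have "{a, y} \<in> edges G" by (simp add: insert_commute)
          moreover have "reach_in (edges G) (B a) a 0 a" unfolding B_def by simp
          ultimately show ?thesis using y by auto
        qed
      qed
      show "\<forall>a\<in>L. \<forall>b\<in>L. a \<noteq> b \<longrightarrow> B a \<inter> B b = {}"
        unfolding B_def using SL by auto
      show "\<forall>a\<in>L. \<forall>b\<in>L. {a,b} \<in> P2 \<longrightarrow> (\<exists>x\<in>B a. \<exists>y\<in>B b. {x,y} \<in> edges G)"
      proof (intro ballI impI)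
        fix a b assume ab: "a \<in> L" "b \<in> L" "{a,b} \<in> P2"
        then obtain v where vS: "v \<in> S" and ev: "{a,b} = {fst (pr v), snd (pr v)}"
          unfolding P2_def pe_def by blast
        have ne2: "fst (pr v) \<noteq> snd (pr v)" using prL(3)[OF vS] .
        from ev have "(a = fst (pr v) \<and> b = snd (pr v)) \<or> (a = snd (pr v) \<and> b = fst (pr v))"
          by (simp add: doubleton_eq_iff)
        then show "\<exists>x\<in>B a. \<exists>y\<in>B b. {x,y} \<in> edges G"
        proof
          assume h: "a = fst (pr v) \<and> b = snd (pr v)"
          have "v \<in> B a" unfolding B_def using vS h by simp
          moreover have "b \<in> B b" unfolding B_def by simp
          moreover have "{v, b} \<in> edges G" using prE(2)[OF vS] h EGE by auto
          ultimately show ?thesis by blast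
        next
          assume h: "a = snd (pr v) \<and> b = fst (pr v)"
          have "a \<in> B a" unfolding B_def by simp
          moreover have "v \<in> B b" unfolding B_def using vS h by simp
          moreover have "{a, v} \<in> edges G" using prE(2)[OF vS] h EGE by (auto simp: insert_commute)
          ultimately show ?thesis by blast
        qed
      qed
    qed
    define fib where "fib e = {v \<in> S. pe v = e}" for e
    have fS: "finite S" using fV SV finite_subset by blast
    have fP2: "finite P2" unfolding P2_def using fS by simp
    have fibs: "card (fib e) \<le> s" if eP: "e \<in> P2" for e
    proof (rule ccontr)
      assume "\<not> card (fib e) \<le> s"
      then have "s \<le> card (fib e)" by simp
      then obtain X where X: "X \<subseteq> fib e" "card X = s" "finite X"
        using obtain_subset_with_card_n by metis
      obtain v0 where v0: "v0 \<in> S" "e = pe v0" using eP unfolding P2_def by blast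
      define a where "a = fst (pr v0)"
      define b where "b = snd (pr v0)"
      have aL: "a \<in> L" and bL: "b \<in> L" and abne: "a \<noteq> b" using prL[OF v0(1)] a_def b_def by auto
      have "a \<in> verts G" "b \<in> verts G" using aL bL LV VGV by auto
      moreover have "X \<subseteq> verts G - {a, b}"
      proof
        fix x assume "x \<in> X"
        then have "x \<in> S" using X(1) unfolding fib_def by auto
        then show "x \<in> verts G - {a,b}" using aL bL SL SV VGV by auto
      qed
      moreover have "\<forall>x\<in>X. {a, x} \<in> edges G \<and> {b, x} \<in> edges G"
      proof
        fix x assume "x \<in> X"
        then have xS: "x \<in> S" and px: "pe x = {a,b}" using X(1) v0 unfolding fib_def a_def b_def pe_def by auto
        have "{x, fst (pr x)} \<in> edges G" "{x, snd (pr x)} \<in> edges G" using prE[OF xS] EGE by auto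
        moreover have "a \<in> {fst (pr x), snd (pr x)}" "b \<in> {fst (pr x), snd (pr x)}"
          using px unfolding pe_def by auto
        ultimately have "{x, a} \<in> edges G" "{x, b} \<in> edges G" by auto
        then show "{a, x} \<in> edges G \<and> {b, x} \<in> edges G" by (simp add: insert_commute)
      qed
      ultimately show False using ks abne X unfolding K2s_free_def by blast
    qed
    have "S = (\<Union>e\<in>P2. fib e)" unfolding fib_def P2_def by auto
    then have "card S \<le> (\<Sum>e\<in>P2. card (fib e))" using card_UN_le[OF fP2, of fib] by simp
    also have "\<dots> \<le> (\<Sum>e\<in>P2. s)" using fibs by (intro sum_mono) auto
    finally have stepC: "card S \<le> s * card P2" by (simp add: mult.commute)
    have "(\<Sum>v\<in>L. Suc d) \<le> (\<Sum>v\<in>L. degree G' v)" unfolding L_def by (intro sum_mono) auto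
    also have "\<dots> \<le> (\<Sum>v\<in>V. degree G' v)" using fV LV by (intro sum_mono2) auto
    also have "\<dots> \<le> 2 * card E" unfolding V_def E_def by (rule degree_sum[OF g'])
    finally have stepD: "card L * Suc d \<le> 2 * card E" by simp
    have stepE: "card V = card L + card S" unfolding S_def using fV LV
      by (simp add: card_Diff_subset card_mono finite_subset)
    have npos: "card V > 0" using fV ne V_def by (simp add: card_gt_0_iff)
    define n where "n = real (card V)"
    define l where "l = real (card L)"
    have n0: "n > 0" using npos n_def by simp
    have l0: "l \<ge> 0" using l_def by simp
    have h1: "real (card S) \<le> real s * real (card P2)" using stepC by (metis of_nat_le_iff of_nat_mult)
    have h2: "real s * real (card P2) \<le> real s * (C * l)" using stepB l_def by (intro mult_left_mono) auto
    have h3: "n \<le> (1 + real s * C) * l" using stepE h1 h2 n_def l_def by (simp add: algebra_simps)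
    have h4: "l * (real d + 1) \<le> 2 * C * n"
    proof -
      have "real (card L * Suc d) \<le> real (2 * card E)" using stepD by (metis of_nat_le_iff)
      then have "l * (real d + 1) \<le> 2 * real (card E)" using l_def by (simp add: algebra_simps)
      also have "\<dots> \<le> 2 * (C * n)" using stepA n_def by simp
      finally show ?thesis by simp
    qed
    have sC: "1 + real s * C \<ge> 0" using C0 by simp
    have "n * (real d + 1) \<le> ((1 + real s * C) * l) * (real d + 1)"
      using h3 by (intro mult_right_mono) auto
    also have "\<dots> = (1 + real s * C) * (l * (real d + 1))" by simp
    also have "\<dots> \<le> (1 + real s * C) * (2 * C * n)" using h4 sC by (intro mult_left_mono) auto
    also have "\<dots> = (2 * C * (1 + real s * C)) * n" by simp
    also have "\<dots> < (real d + 1) * n" using dC n0 by (intro mult_strict_right_mono) auto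
    finally show False by simp
  qed
qed

lemma sd_mono:
  assumes "d \<le> D" "strongly_degenerate d G"
  shows "strongly_degenerate D G"
  unfolding strongly_degenerate_def
proof (intro allI impI)
  fix H :: "'a graph" assume H: "subgraph H G \<and> verts H \<noteq> {}"
  then obtain v where v: "removable d H v" using assms(2) unfolding strongly_degenerate_def by blast
  have gH: "graph H" using H subgraph_def by blast
  have "{w \<in> nbrs H v. degree H w > D} \<subseteq> {w \<in> nbrs H v. degree H w > d}" using assms(1) by auto
  then have "card {w \<in> nbrs H v. degree H w > D} \<le> card {w \<in> nbrs H v. degree H w > d}"
    using graph_finite_nbrs[OF gH, of v] by (intro card_mono) auto
  then have "removable D H v" using v assms(1) unfolding removable_def by auto
  then show "\<exists>v. removable D H v" by blast
qed



lemma hg_bound: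
  fixes G :: "'a graph" and d q :: nat
  assumes d: "d \<ge> 1" and g: "graph G" and sd: "strongly_degenerate d G"
    and win: "hat_guessing_win G q"
  shows "q < 4*d*((4*d)^d+1)"
proof (rule ccontr)
  define K where "K = (4*d)^d + 1"
  define Q where "Q = 4*d*K"
  assume "\<not> q < 4*d*((4*d)^d+1)"
  then have qQ: "Q \<le> q" unfolding Q_def K_def by simp
  obtain f :: "'a \<Rightarrow> ('a \<Rightarrow> nat) \<Rightarrow> nat" where
    f1: "\<forall>v\<in>verts G. \<forall>g. f v g < q" and
    f2: "\<forall>c. (\<forall>v\<in>verts G. c v < q) \<longrightarrow> (\<exists>v\<in>verts G. f v (restrict c (nbrs G v)) = c v)"
    using win unfolding hat_guessing_win_def by blast
  define F where "F v c = {f v (restrict c (nbrs G v))} \<inter> {..<Q}" for v and c :: "'a \<Rightarrow> nat"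
  have loc: "\<forall>w\<in>verts G. \<forall>c c'. (\<forall>x\<in>nbrs G w. c x = c' x) \<longrightarrow> F w c = F w c'"
  proof (intro ballI allI impI)
    fix w and c c' :: "'a \<Rightarrow> nat" assume "\<forall>x\<in>nbrs G w. c x = c' x"
    then have "restrict c (nbrs G w) = restrict c' (nbrs G w)" by (auto simp: restrict_def)
    then show "F w c = F w c'" unfolding F_def by simp
  qed
  have bnd: "\<forall>w\<in>verts G. \<forall>c. F w c \<subseteq> {..<Q} \<and> card (F w c) \<le> (4*d)^(d - degree G w)"
  proof (intro ballI allI conjI)
    fix w and c :: "'a \<Rightarrow> nat"
    show "F w c \<subseteq> {..<Q}" unfolding F_def by auto
    have "card (F w c) \<le> card {f w (restrict c (nbrs G w))}" unfolding F_def
      by (intro card_mono) auto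
    also have "\<dots> = 1" by simp
    also have "1 \<le> (4*d)^(d - degree G w)" using d by simp
    finally show "card (F w c) \<le> (4*d)^(d - degree G w)" .
  qed
  obtain c where c: "\<forall>v\<in>verts G. c v < Q \<and> c v \<notin> F v c"
    using core[OF d K_def Q_def refl g sd loc bnd] by blast
  have "\<forall>v\<in>verts G. c v < q" using c qQ by fastforce
  then obtain v where v: "v \<in> verts G" "f v (restrict c (nbrs G v)) = c v" using f2 by blast
  then show False using c unfolding F_def by auto
qed

lemma Q_le:
  fixes d :: nat assumes d: "d \<ge> 1"
  shows "4*d*((4*d)^d+1) \<le> (2*(4*d))^(4*d)"
proof -
  have "1 \<le> (4*d)^d" using d by simp
  then have "(4*d)^d+1 \<le> (4*d)^d + (4*d)^d" by linarith
  then have "4*d*((4*d)^d+1) \<le> 4*d*((4*d)^d + (4*d)^d)" by (rule mult_left_mono) simp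
  also have "\<dots> = (8*d) * (4*d)^d" by simp
  also have "\<dots> \<le> (8*d) * (8*d)^d" by (intro mult_left_mono power_mono) auto
  also have "\<dots> = (8*d)^(Suc d)" by simp
  also have "\<dots> \<le> (8*d)^(4*d)" using d by (intro power_increasing) auto
  finally show ?thesis by simp
qed

theorem corollary1p6:
  fixes \<G> :: "'a graph set" and s :: nat
  assumes "\<forall>G\<in>\<G>. graph G"
    and "bounded_expansion \<G>"
  shows "\<exists>d::nat. d \<ge> 1 \<and> (\<forall>G\<in>\<G>. K2s_free s G \<longrightarrow>
           strongly_degenerate d G \<and> (\<forall>q. hat_guessing_win G q \<longrightarrow> q \<le> (2 * d) ^ d))"
proof -
  obtain C0 where C0: "\<forall>G\<in>\<G>. nabla_le 1 G C0"
    using assms(2) unfolding bounded_expansion_def by blast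
  define C where "C = max C0 0"
  have nab: "nabla_le 1 G C" if "G \<in> \<G>" for G
    using C0 that unfolding nabla_le_def C_def by (meson max.coboundedI1 order_trans)
  have Cnn: "C \<ge> 0" unfolding C_def by simp
  define d0 where "d0 = nat \<lceil>2*C*(1 + real s*C)\<rceil> + 1"
  have d01: "d0 \<ge> 1" unfolding d0_def by simp
  have dC: "real d0 + 1 > 2*C*(1 + real s*C)"
    using real_nat_ceiling_ge[of "2*C*(1 + real s*C)"] unfolding d0_def by simp
  define D where "D = 4*d0"
  show ?thesis
  proof (intro exI[of _ D] conjI ballI impI allI)
    show "D \<ge> 1" using d01 D_def by simp
    fix G assume GG: "G \<in> \<G>" and ks: "K2s_free s G"
    have g: "graph G" using assms(1) GG by blast
    have sd0: "strongly_degenerate d0 G" by (rule part1[OF g nab[OF GG] Cnn ks dC])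
    show "strongly_degenerate D G" using sd_mono[OF _ sd0] D_def by simp
    fix q assume "hat_guessing_win G q"
    then have "q < 4*d0*((4*d0)^d0+1)" by (rule hg_bound[OF d01 g sd0])
    also have "\<dots> \<le> (2*D)^D" unfolding D_def by (rule Q_le[OF d01])
    finally show "q \<le> (2*D)^D" by simp
  qed
qed

end
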